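(* Let $C=(C_1,\dots,C_m)$ be a quantum circuit whose gates carry the distinct labels $1,\dots,m$ (gate $C_k$ has label $k$). Let $C'$ be a circuit obtained from $C$ by a finite sequence of swaps of adjacent gates whose unitaries commute, where each gate keeps its label from $C$. Let $G$ be the canonical form of $C$ and $G'$ the canonical form of $C'$, where in constructing $G'$ each vertex is labeled by the label (from $C$) of the gate it corresponds to. Then $G$ and $G'$ are the same labeled directed acyclic graph.
   Context: A gate is a unitary operation acting on a specified ordered list of qubits; we identify it with the unitary it induces on the full $n$-qubit space. Two gates $A,B$ commute if their unitaries satisfy $[A,B]=AB-BA=0$. A circuit is a finite sequence of gates $(C_1,\dots,C_m)$ (applied left to right). The canonical form of a circuit $D=(D_1,\dots,D_m)$ (each gate carrying a label) is the directed graph built as follows: start with the empty graph; for $t=1,\dots,m$: mark every vertex already in the graph as "reachable"; add a new vertex for gate $D_t$ (labeled with $D_t$'s label); then for $s=t-1,t-2,\dots,1$ in this order, if the vertex of $D_s$ is marked reachable and $[D_s,D_t]\neq 0$, add a directed edge from the vertex of $D_s$ to the vertex of $D_t$ and mark every predecessor of the vertex of $D_s$ (every vertex from which there is a directed path to it in the current graph) as not reachable. *)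

theory Defs
  imports "Jordan_Normal_Form.Schur_Decomposition"
begin

(* A gate, identified with the unitary it induces on the full n-qubit space
   (a 2^n x 2^n complex matrix). *)
definition unitary_mat :: "nat \<Rightarrow> complex mat \<Rightarrow> bool" where
  "unitary_mat N U \<longleftrightarrow> U \<in> carrier_mat N N \<and> U * mat_adjoint U = 1\<^sub>m N \<and> mat_adjoint U * U = 1\<^sub>m N"

definition is_gate :: "nat \<Rightarrow> complex mat \<Rightarrow> bool" where
  "is_gate n U \<longleftrightarrow> unitary_mat (2 ^ n) U"

definition gates_commute :: "complex mat \<Rightarrow> complex mat \<Rightarrow> bool" where
  "gates_commute A B \<longleftrightarrow> A * B - B * A = 0\<^sub>m (dim_row A) (dim_col B)"

(* A labeled circuit: list of (label, gate) pairs, applied left to right. *)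
type_synonym lcircuit = "(nat \<times> complex mat) list"

inductive comm_swap :: "lcircuit \<Rightarrow> lcircuit \<Rightarrow> bool" where
  "gates_commute (snd a) (snd b) \<Longrightarrow> comm_swap (xs @ [a, b] @ ys) (xs @ [b, a] @ ys)"

(* Canonical form construction. Vertices are positions 0..<m (vertex t is gate D_t).
   State during the inner loop: (edges, reachable-marked vertices). *)
definition canon_inner_step :: "lcircuit \<Rightarrow> nat \<Rightarrow> nat \<Rightarrow> (nat \<times> nat) set \<times> nat set
     \<Rightarrow> (nat \<times> nat) set \<times> nat set" where
  "canon_inner_step D t s st =
     (let (E, R) = st in
      if s \<in> R \<and> \<not> gates_commute (snd (D ! s)) (snd (D ! t))
      then (let E' = insert (s, t) E in (E', R - {u. (u, s) \<in> E'\<^sup>+}))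
      else (E, R))"

definition canon_outer_step :: "lcircuit \<Rightarrow> nat \<Rightarrow> (nat \<times> nat) set \<Rightarrow> (nat \<times> nat) set" where
  "canon_outer_step D t E = fst (fold (canon_inner_step D t) (rev [0..<t]) (E, {0..<t}))"

definition canon_edges :: "lcircuit \<Rightarrow> (nat \<times> nat) set" where
  "canon_edges D = fold (canon_outer_step D) [0..<length D] {}"

type_synonym lgraph = "nat set \<times> (nat \<Rightarrow> nat) \<times> (nat \<times> nat) set"

definition canonical_form :: "lcircuit \<Rightarrow> lgraph" where
  "canonical_form D = ({0..<length D}, (\<lambda>v. fst (D ! v)), canon_edges D)"

definition same_labeled_graph :: "lgraph \<Rightarrow> lgraph \<Rightarrow> bool" where
  "same_labeled_graph G H \<longleftrightarrow>
     (case G of (V, l, E) \<Rightarrow> case H of (V', l', E') \<Rightarrow>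
       E \<subseteq> V \<times> V \<and> E' \<subseteq> V' \<times> V' \<and>
       (\<exists>f. bij_betw f V V' \<and> (\<forall>v\<in>V. l' (f v) = l v) \<and>
            (\<forall>u\<in>V. \<forall>v\<in>V. (u, v) \<in> E \<longleftrightarrow> (f u, f v) \<in> E')))"

definition is_dag :: "lgraph \<Rightarrow> bool" where
  "is_dag G \<longleftrightarrow> (case G of (V, l, E) \<Rightarrow> E \<subseteq> V \<times> V \<and> acyclic E)"

end

theory Submission
  imports Defs
begin

definition rel :: "lcircuit \<Rightarrow> (nat \<times> nat) set" where
  "rel D = {(s,t). s < t \<and> t < length D \<and> \<not> gates_commute (snd (D!s)) (snd (D!t))}"

definition hasse :: "lcircuit \<Rightarrow> (nat \<times> nat) set" where
  "hasse D = {(s,t). (s,t) \<in> rel D \<and> \<not> (\<exists>u. (s,u) \<in> (rel D)\<^sup>+ \<and> (u,t) \<in> (rel D)\<^sup>+)}"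

lemma fwd_trancl:
  fixes F :: "(nat \<times> nat) set"
  assumes "F \<subseteq> {(a,b). a < b}"
  shows "(x,y) \<in> F\<^sup>+ \<Longrightarrow> x < y"
proof (induction rule: trancl_induct)
  case (base y) then show ?case using assms by auto
next
  case (step y z)
  have "y < z" using step(2) assms by auto
  then show ?case using step(3) by simp
qed

lemma rel_fwd: "rel D \<subseteq> {(a,b). a < b}" by (auto simp: rel_def)
lemma hasse_rel: "hasse D \<subseteq> rel D" by (auto simp: hasse_def)

lemma P_fwd: "(x,y) \<in> (rel D)\<^sup>+ \<Longrightarrow> x < y"
  using fwd_trancl[OF rel_fwd] .

lemma restrict_trancl:
  fixes F :: "(nat \<times> nat) set"
  assumes F: "F \<subseteq> {(a,b). a < b}"
  shows "(u,z) \<in> F\<^sup>+ \<Longrightarrow> z < t \<Longrightarrow> (u,z) \<in> {(a,b) \<in> F. b < t}\<^sup>+"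
proof (induction rule: trancl_induct)
  case (base y) then show ?case by auto
next
  case (step y z)
  have "y < z" using step.hyps(2) F by auto
  then have "y < t" using step.prems by simp
  then have "(u,y) \<in> {(a,b) \<in> F. b < t}\<^sup>+" using step.IH by blast
  moreover have "(y,z) \<in> {(a,b) \<in> F. b < t}" using step by auto
  ultimately show ?case by (rule trancl_into_trancl)
qed

lemma P_sub_H: "(s,t) \<in> (rel D)\<^sup>+ \<Longrightarrow> (s,t) \<in> (hasse D)\<^sup>+"
proof (induction "t - s" arbitrary: s t rule: less_induct)
  case less
  show ?case
  proof (cases "\<exists>u. (s,u) \<in> (rel D)\<^sup>+ \<and> (u,t) \<in> (rel D)\<^sup>+")
    case True
    then obtain u where u: "(s,u) \<in> (rel D)\<^sup>+" "(u,t) \<in> (rel D)\<^sup>+" by blast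
    have "s < u" "u < t" using P_fwd u by auto
    then have "(s,u) \<in> (hasse D)\<^sup>+" "(u,t) \<in> (hasse D)\<^sup>+" using less.hyps u by auto
    then show ?thesis by (rule trancl_trans)
  next
    case False
    from less.prems have "(s,t) \<in> rel D"
    proof (cases rule: tranclE)
      case base then show ?thesis .
    next
      case (step c) then show ?thesis using False by blast
    qed
    with False have "(s,t) \<in> hasse D" by (auto simp: hasse_def)
    then show ?thesis by blast
  qed
qed

lemma key:
  "(\<exists>u. (s,u) \<in> (rel D)\<^sup>+ \<and> (u,t) \<in> (rel D)\<^sup>+) \<longleftrightarrow> (\<exists>s'. (s',t) \<in> hasse D \<and> (s,s') \<in> (rel D)\<^sup>+)"
proof
  assume "\<exists>u. (s,u) \<in> (rel D)\<^sup>+ \<and> (u,t) \<in> (rel D)\<^sup>+"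
  then obtain u where u: "(s,u) \<in> (rel D)\<^sup>+" "(u,t) \<in> (rel D)\<^sup>+" by blast
  have "(u,t) \<in> (hasse D)\<^sup>+" using P_sub_H u(2) .
  then show "\<exists>s'. (s',t) \<in> hasse D \<and> (s,s') \<in> (rel D)\<^sup>+"
  proof (cases rule: tranclE)
    case base then show ?thesis using u(1) by blast
  next
    case (step c)
    have "(u,c) \<in> (rel D)\<^sup>+" using step(1) trancl_mono[OF _ hasse_rel] by blast
    then have "(s,c) \<in> (rel D)\<^sup>+" using trancl_trans[OF u(1)] by blast
    then show ?thesis using step(2) by blast
  qed
next
  assume "\<exists>s'. (s',t) \<in> hasse D \<and> (s,s') \<in> (rel D)\<^sup>+"
  then show "\<exists>u. (s,u) \<in> (rel D)\<^sup>+ \<and> (u,t) \<in> (rel D)\<^sup>+" using hasse_rel by blast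
qed

lemma T:
  assumes "{(a,b) \<in> hasse D. b < t} \<subseteq> F" "F \<subseteq> hasse D" "s < t"
  shows "(u,s) \<in> F\<^sup>+ \<longleftrightarrow> (u,s) \<in> (rel D)\<^sup>+"
proof
  assume "(u,s) \<in> F\<^sup>+"
  then show "(u,s) \<in> (rel D)\<^sup>+" using trancl_mono assms(2) hasse_rel by blast
next
  assume "(u,s) \<in> (rel D)\<^sup>+"
  then have "(u,s) \<in> (hasse D)\<^sup>+" by (rule P_sub_H)
  then have "(u,s) \<in> {(a,b) \<in> hasse D. b < t}\<^sup>+"
    using restrict_trancl[of "hasse D"] hasse_rel rel_fwd assms(3) by blast
  then show "(u,s) \<in> F\<^sup>+" using trancl_mono assms(1) by blast
qed

lemma inner:
  assumes t: "t < length D" and k: "k \<le> t"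
  shows "foldr (canon_inner_step D t) [k..<t] ({(a,b) \<in> hasse D. b < t}, {0..<t})
     = ({(a,b) \<in> hasse D. b < t} \<union> {(s',b) \<in> hasse D. b = t \<and> k \<le> s'},
        {0..<t} - {u. \<exists>s'. k \<le> s' \<and> (s',t) \<in> hasse D \<and> (u,s') \<in> (rel D)\<^sup>+})"
  using k
proof (induction "t - k" arbitrary: k)
  case 0
  then have "k = t" by simp
  moreover have "{(s',b) \<in> hasse D. b = t \<and> t \<le> s'} = {}" using hasse_rel rel_fwd by fastforce
  moreover have "{u. \<exists>s'. t \<le> s' \<and> (s',t) \<in> hasse D \<and> (u,s') \<in> (rel D)\<^sup>+} = {}"
    using hasse_rel rel_fwd by fastforce
  ultimately show ?case by auto
next
  case (Suc d)
  then have kt: "k < t" by simp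
  define Ht where "Ht = {(a,b) \<in> hasse D. b < t}"
  define E1 where "E1 = {(s',b) \<in> hasse D. b = t \<and> Suc k \<le> s'}"
  define R1 where "R1 = {0..<t} - {u. \<exists>s'. Suc k \<le> s' \<and> (s',t) \<in> hasse D \<and> (u,s') \<in> (rel D)\<^sup>+}"
  have IH: "foldr (canon_inner_step D t) [Suc k..<t] (Ht, {0..<t}) = (Ht \<union> E1, R1)"
    using Suc.hyps(1)[of "Suc k"] Suc kt unfolding Ht_def E1_def R1_def by simp
  have split: "[k..<t] = k # [Suc k..<t]" using kt by (simp add: upt_conv_Cons)
  have res: "foldr (canon_inner_step D t) [k..<t] (Ht, {0..<t}) = canon_inner_step D t k (Ht \<union> E1, R1)"
    using IH split by simp
  show ?case
  proof (cases "(k,t) \<in> hasse D")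
    case True
    have kR: "k \<in> R1"
    proof -
      have "\<not> (\<exists>s'. (s',t) \<in> hasse D \<and> (k,s') \<in> (rel D)\<^sup>+)"
        using True key[of k D t] by (auto simp: hasse_def)
      then show ?thesis using kt unfolding R1_def by auto
    qed
    have nc: "\<not> gates_commute (snd (D ! k)) (snd (D ! t))"
      using True by (auto simp: hasse_def rel_def)
    have sub1: "{(a,b) \<in> hasse D. b < t} \<subseteq> insert (k,t) (Ht \<union> E1)" by (auto simp: Ht_def)
    have sub2: "insert (k,t) (Ht \<union> E1) \<subseteq> hasse D" using True unfolding Ht_def E1_def by auto
    have eqs: "{u. (u,k) \<in> (insert (k,t) (Ht \<union> E1))\<^sup>+} = {u. (u,k) \<in> (rel D)\<^sup>+}"
      using T[OF sub1 sub2 kt] by blast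
    have "canon_inner_step D t k (Ht \<union> E1, R1)
        = (insert (k,t) (Ht \<union> E1), R1 - {u. (u,k) \<in> (insert (k,t) (Ht \<union> E1))\<^sup>+})"
      using kR nc by (simp add: canon_inner_step_def Let_def)
    also have "\<dots> = (Ht \<union> {(s',b) \<in> hasse D. b = t \<and> k \<le> s'},
        {0..<t} - {u. \<exists>s'. k \<le> s' \<and> (s',t) \<in> hasse D \<and> (u,s') \<in> (rel D)\<^sup>+})"
    proof -
      have h: "\<And>s'. (k \<le> s') = (s' = k \<or> Suc k \<le> s')" by auto
      show ?thesis unfolding eqs h using True unfolding E1_def R1_def by blast
    qed
    finally show ?thesis using res unfolding Ht_def by simp
  next
    case False
    have cond: "\<not> (k \<in> R1 \<and> \<not> gates_commute (snd (D ! k)) (snd (D ! t)))"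
    proof
      assume a: "k \<in> R1 \<and> \<not> gates_commute (snd (D ! k)) (snd (D ! t))"
      then have "(k,t) \<in> rel D" using kt t by (auto simp: rel_def)
      moreover have "\<not> (\<exists>s'. (s',t) \<in> hasse D \<and> (k,s') \<in> (rel D)\<^sup>+)"
        using a P_fwd unfolding R1_def by (auto simp: Suc_le_eq)
      ultimately have "(k,t) \<in> hasse D" using key[of k D t] by (auto simp: hasse_def)
      then show False using False by simp
    qed
    have "canon_inner_step D t k (Ht \<union> E1, R1) = (Ht \<union> E1, R1)"
      using cond by (auto simp: canon_inner_step_def)
    also have "\<dots> = (Ht \<union> {(s',b) \<in> hasse D. b = t \<and> k \<le> s'},
        {0..<t} - {u. \<exists>s'. k \<le> s' \<and> (s',t) \<in> hasse D \<and> (u,s') \<in> (rel D)\<^sup>+})"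
    proof -
      have h: "\<And>s'. (k \<le> s') = (s' = k \<or> Suc k \<le> s')" by auto
      show ?thesis unfolding h using False unfolding E1_def R1_def by blast
    qed
    finally show ?thesis using res unfolding Ht_def by simp
  qed
qed

lemma outer: "t \<le> length D \<Longrightarrow> fold (canon_outer_step D) [0..<t] {} = {(a,b) \<in> hasse D. b < t}"
proof (induction t)
  case 0 show ?case by simp
next
  case (Suc t)
  have "fold (canon_outer_step D) [0..<Suc t] {} = canon_outer_step D t {(a,b) \<in> hasse D. b < t}"
    using Suc by simp
  also have "\<dots> = fst (foldr (canon_inner_step D t) [0..<t] ({(a,b) \<in> hasse D. b < t}, {0..<t}))"
    by (simp add: canon_outer_step_def foldr_conv_fold)
  also have "\<dots> = {(a,b) \<in> hasse D. b < t} \<union> {(s',b) \<in> hasse D. b = t \<and> 0 \<le> s'}"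
    using inner[of t D 0] Suc.prems by simp
  also have "\<dots> = {(a,b) \<in> hasse D. b < Suc t}" by auto
  finally show ?case .
qed

lemma canon_hasse: "canon_edges D = hasse D"
proof -
  have "canon_edges D = {(a,b) \<in> hasse D. b < length D}"
    unfolding canon_edges_def by (rule outer) simp
  also have "\<dots> = hasse D" using hasse_rel by (auto simp: rel_def)
  finally show ?thesis .
qed

lemma dag: "is_dag (canonical_form D)"
proof -
  have "hasse D \<subseteq> {0..<length D} \<times> {0..<length D}" using hasse_rel by (fastforce simp: rel_def)
  moreover have "acyclic (hasse D)"
    unfolding acyclic_def using fwd_trancl[of "hasse D"] hasse_rel rel_fwd by blast
  ultimately show ?thesis by (simp add: is_dag_def canonical_form_def canon_hasse)
qed

lemma comm_sym:
  assumes "is_gate n A" "is_gate n B" "gates_commute A B"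
  shows "gates_commute B A"
proof -
  have A: "A \<in> carrier_mat (2^n) (2^n)" and B: "B \<in> carrier_mat (2^n) (2^n)"
    using assms(1,2) by (auto simp: is_gate_def unitary_mat_def)
  have h: "A * B - B * A = 0\<^sub>m (2^n) (2^n)" using assms(3) A B by (simp add: gates_commute_def)
  have "B * A - A * B = 0\<^sub>m (2^n) (2^n)"
  proof (rule eq_matI)
    fix i j assume ij: "i < dim_row (0\<^sub>m (2^n) (2^n) :: complex mat)" "j < dim_col (0\<^sub>m (2^n) (2^n) :: complex mat)"
    have "(A * B - B * A) $$ (i,j) = 0" using h ij by simp
    then show "(B * A - A * B) $$ (i,j) = 0\<^sub>m (2^n) (2^n) $$ (i,j)" using ij A B by simp
  qed (use A B in auto)
  then show ?thesis using A B by (simp add: gates_commute_def)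
qed

definition sw :: "nat \<Rightarrow> nat \<Rightarrow> nat" where
  "sw i k = (if k = i then Suc i else if k = Suc i then i else k)"

lemma swap_iso:
  assumes sw: "comm_swap D D'" and g: "\<forall>x \<in> set D. is_gate n (snd x)"
  shows "\<exists>f. bij_betw f {0..<length D} {0..<length D'} \<and> (\<forall>k<length D. D'!(f k) = D!k)
     \<and> (\<forall>a<length D. \<forall>b<length D. (a,b) \<in> rel D \<longleftrightarrow> (f a, f b) \<in> rel D') \<and> set D' = set D"
  using sw
proof cases
  case (1 a b xs ys)
  define i where "i = length xs"
  have len: "length D' = length D" "length D = i + 2 + length ys" using 1 by (auto simp: i_def)
  have sD: "set D' = set D" using 1 by auto
  have bij: "bij_betw (sw i) {0..<length D} {0..<length D'}"
    by (rule bij_betwI[of _ _ _ "sw i"]) (auto simp: sw_def len)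
  have nth: "D'!(sw i k) = D!k" if k: "k < length D" for k
  proof -
    consider "k < i" | "k = i" | "k = Suc i" | m where "k = Suc (Suc (i + m))"
      by (metis add_Suc_right less_Suc_eq less_imp_Suc_add linorder_neqE_nat)
    then show ?thesis
    proof cases
      case 1 then show ?thesis using \<open>D = _\<close> \<open>D' = _\<close> by (simp add: sw_def nth_append i_def)
    next
      case 2 then show ?thesis using \<open>D = _\<close> \<open>D' = _\<close> by (simp add: sw_def nth_append i_def)
    next
      case 3 then show ?thesis using \<open>D = _\<close> \<open>D' = _\<close> by (simp add: sw_def nth_append i_def)
    next
      case 4 then show ?thesis using \<open>D = _\<close> \<open>D' = _\<close> by (simp add: sw_def nth_append i_def)
    qed
  qed
  have ga: "is_gate n (snd a)" and gb: "is_gate n (snd b)" using g 1 by auto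
  have ab: "gates_commute (snd a) (snd b)" using 1 by simp
  have ba: "gates_commute (snd b) (snd a)" using comm_sym[OF ga gb ab] .
  have Di: "D!i = a" "D!Suc i = b" using 1 by (auto simp: i_def nth_append)
  have relr: "(x,y) \<in> rel D \<longleftrightarrow> (sw i x, sw i y) \<in> rel D'" if xy: "x < length D" "y < length D" for x y
  proof -
    have l: "sw i x < length D" "sw i y < length D" using xy len by (auto simp: sw_def)
    have "(x,y) \<in> rel D \<longleftrightarrow> x < y \<and> \<not> gates_commute (snd (D!x)) (snd (D!y))"
      using xy by (auto simp: rel_def)
    moreover have "(sw i x, sw i y) \<in> rel D' \<longleftrightarrow> sw i x < sw i y \<and> \<not> gates_commute (snd (D!x)) (snd (D!y))"
      using l len nth xy by (auto simp: rel_def)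
    moreover have "x < y \<and> \<not> gates_commute (snd (D!x)) (snd (D!y)) \<longleftrightarrow>
                   sw i x < sw i y \<and> \<not> gates_commute (snd (D!x)) (snd (D!y))"
    proof (cases "x = i \<and> y = Suc i \<or> x = Suc i \<and> y = i")
      case True then show ?thesis using Di ab ba by (auto simp: sw_def)
    next
      case False then show ?thesis by (auto simp: sw_def)
    qed
    ultimately show ?thesis by simp
  qed
  show ?thesis using bij nth relr sD by blast
qed

lemma trancl_iso1:
  assumes "r \<subseteq> A \<times> A"
    "\<And>a b. a \<in> A \<Longrightarrow> b \<in> A \<Longrightarrow> (a,b) \<in> r \<longleftrightarrow> (f a, f b) \<in> r'"
  shows "(x,y) \<in> r\<^sup>+ \<Longrightarrow> (f x, f y) \<in> r'\<^sup>+"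
proof (induction rule: trancl_induct)
  case (base y) then show ?case using assms by blast
next
  case (step y z)
  then have "(f y, f z) \<in> r'" using assms by blast
  then show ?case using step(3) by (meson trancl_into_trancl)
qed

lemma trancl_iso:
  assumes bij: "bij_betw f A B" and r: "r \<subseteq> A \<times> A" and r': "r' \<subseteq> B \<times> B"
    and iso: "\<And>a b. a \<in> A \<Longrightarrow> b \<in> A \<Longrightarrow> (a,b) \<in> r \<longleftrightarrow> (f a, f b) \<in> r'"
    and xy: "x \<in> A" "y \<in> A"
  shows "(x,y) \<in> r\<^sup>+ \<longleftrightarrow> (f x, f y) \<in> r'\<^sup>+"
proof
  assume "(x,y) \<in> r\<^sup>+" then show "(f x, f y) \<in> r'\<^sup>+" using trancl_iso1[of r A f r' x y] r iso by blast
next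
  define g where "g = inv_into A f"
  have gi: "\<And>a. a \<in> B \<Longrightarrow> f (g a) = a" "\<And>a. a \<in> B \<Longrightarrow> g a \<in> A" "\<And>a. a \<in> A \<Longrightarrow> g (f a) = a"
    using bij unfolding g_def
    by (auto simp: bij_betw_def f_inv_into_f inv_into_into inv_into_f_f)
  have iso': "(a,b) \<in> r' \<longleftrightarrow> (g a, g b) \<in> r" if "a \<in> B" "b \<in> B" for a b
    using iso[of "g a" "g b"] gi that by auto
  assume "(f x, f y) \<in> r'\<^sup>+"
  then have "(g (f x), g (f y)) \<in> r\<^sup>+" using trancl_iso1[of r' B g r "f x" "f y"] r' iso' by blast
  then show "(x,y) \<in> r\<^sup>+" using gi xy by simp
qed

lemma rel_dom: "rel D \<subseteq> {0..<length D} \<times> {0..<length D}" by (auto simp: rel_def)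

lemma hasse_iso:
  assumes bij: "bij_betw f {0..<length D} {0..<length D'}"
    and iso: "\<forall>a<length D. \<forall>b<length D. (a,b) \<in> rel D \<longleftrightarrow> (f a, f b) \<in> rel D'"
    and ab: "a < length D" "b < length D"
  shows "(a,b) \<in> hasse D \<longleftrightarrow> (f a, f b) \<in> hasse D'"
proof -
  have P: "(x,y) \<in> (rel D)\<^sup>+ \<longleftrightarrow> (f x, f y) \<in> (rel D')\<^sup>+" if "x < length D" "y < length D" for x y
    using trancl_iso[OF bij rel_dom rel_dom, of x y] iso that by auto
  have fin: "\<And>x. x < length D \<Longrightarrow> f x < length D'" using bij by (auto simp: bij_betw_def)
  have ex: "(\<exists>u. (a,u) \<in> (rel D)\<^sup>+ \<and> (u,b) \<in> (rel D)\<^sup>+) \<longleftrightarrow>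
            (\<exists>u. (f a,u) \<in> (rel D')\<^sup>+ \<and> (u,f b) \<in> (rel D')\<^sup>+)"
  proof
    assume "\<exists>u. (a,u) \<in> (rel D)\<^sup>+ \<and> (u,b) \<in> (rel D)\<^sup>+"
    then obtain u where u: "(a,u) \<in> (rel D)\<^sup>+" "(u,b) \<in> (rel D)\<^sup>+" by blast
    have "u < length D" using P_fwd[OF u(2)] ab by simp
    then show "\<exists>u. (f a,u) \<in> (rel D')\<^sup>+ \<and> (u,f b) \<in> (rel D')\<^sup>+" using u P ab by blast
  next
    assume "\<exists>u. (f a,u) \<in> (rel D')\<^sup>+ \<and> (u,f b) \<in> (rel D')\<^sup>+"
    then obtain u where u: "(f a,u) \<in> (rel D')\<^sup>+" "(u,f b) \<in> (rel D')\<^sup>+" by blast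
    have "u < length D'" using P_fwd[OF u(2)] fin[OF ab(2)] by simp
    then obtain v where v: "v < length D" "u = f v" using bij
      by (metis atLeastLessThan_iff bij_betw_iff_bijections zero_le)
    then show "\<exists>u. (a,u) \<in> (rel D)\<^sup>+ \<and> (u,b) \<in> (rel D)\<^sup>+" using u P ab by blast
  qed
  show ?thesis unfolding hasse_def using ex iso ab by auto
qed

theorem mainTheorem1:
  fixes n :: nat and Cs :: "complex mat list" and C' :: lcircuit
  assumes gates: "\<forall>U \<in> set Cs. is_gate n U"
    and swaps: "comm_swap\<^sup>*\<^sup>* (zip [1..<length Cs + 1] Cs) C'"
  shows "is_dag (canonical_form (zip [1..<length Cs + 1] Cs))
       \<and> is_dag (canonical_form C')
       \<and> same_labeled_graph (canonical_form (zip [1..<length Cs + 1] Cs)) (canonical_form C')"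
proof -
  define C0 where "C0 = zip [1..<length Cs + 1] Cs"
  have g0: "\<forall>x \<in> set C0. is_gate n (snd x)" using gates unfolding C0_def
    by (auto dest: set_zip_rightD)
  have inv: "(\<forall>x \<in> set D. is_gate n (snd x)) \<and> (\<exists>f. bij_betw f {0..<length C0} {0..<length D}
      \<and> (\<forall>k<length C0. D!(f k) = C0!k)
      \<and> (\<forall>a<length C0. \<forall>b<length C0. (a,b) \<in> rel C0 \<longleftrightarrow> (f a, f b) \<in> rel D))"
    if "comm_swap\<^sup>*\<^sup>* C0 D" for D
    using that
  proof (induction rule: rtranclp_induct)
    case base
    show ?case using g0 by (intro conjI exI[of _ id]) (auto simp: bij_betw_def inj_on_def)
  next
    case (step D D2)
    then obtain f where f: "bij_betw f {0..<length C0} {0..<length D}"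
      "\<forall>k<length C0. D!(f k) = C0!k"
      "\<forall>a<length C0. \<forall>b<length C0. (a,b) \<in> rel C0 \<longleftrightarrow> (f a, f b) \<in> rel D" by blast
    obtain h where h: "bij_betw h {0..<length D} {0..<length D2}" "\<forall>k<length D. D2!(h k) = D!k"
      "\<forall>a<length D. \<forall>b<length D. (a,b) \<in> rel D \<longleftrightarrow> (h a, h b) \<in> rel D2" "set D2 = set D"
      using swap_iso[OF step(2)] step(3) by blast
    have fin: "\<And>x. x < length C0 \<Longrightarrow> f x < length D" using f(1) by (auto simp: bij_betw_def)
    have "bij_betw (h \<circ> f) {0..<length C0} {0..<length D2}" using f(1) h(1) by (rule bij_betw_trans)
    moreover have "\<forall>k<length C0. D2!((h \<circ> f) k) = C0!k" using f(2) h(2) fin by simp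
    moreover have "\<forall>a<length C0. \<forall>b<length C0. (a,b) \<in> rel C0 \<longleftrightarrow> ((h \<circ> f) a, (h \<circ> f) b) \<in> rel D2"
      using f(3) h(3) fin by simp
    ultimately show ?case using step(3) h(4) by blast
  qed
  obtain f where f: "bij_betw f {0..<length C0} {0..<length C'}"
      "\<forall>k<length C0. C'!(f k) = C0!k"
      "\<forall>a<length C0. \<forall>b<length C0. (a,b) \<in> rel C0 \<longleftrightarrow> (f a, f b) \<in> rel C'"
    using inv[OF swaps[folded C0_def]] by blast
  have "same_labeled_graph (canonical_form C0) (canonical_form C')"
    unfolding same_labeled_graph_def canonical_form_def canon_hasse
    using hasse_rel[of C0] hasse_rel[of C'] rel_dom[of C0] rel_dom[of C'] hasse_iso[OF f(1) f(3)] f(1) f(2)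
    by (auto intro!: exI[of _ f])
  then show ?thesis using dag unfolding C0_def by blast
qed

end
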